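(* Let $A\colon\mathbb{R}_{>0}\to\mathbb{R}_{>0}$ be continuous with $\lim_{x\to\infty}A(x)=0$, and suppose $A$ has a convex differentiable tail, i.e., there is $x_0$ such that $A$ restricted to $(x_0,\infty)$ is convex and differentiable. Let $(a_t)_{t\ge1}$ be a sequence in $\mathbb{R}_{>0}$ satisfying $a_{t+1}=a_t+A(a_t)$ for all $t$, and let $f\colon\mathbb{R}_{>0}\to\mathbb{R}_{>0}$ be a function with $f'(t)=A(f(t))$ for all sufficiently large $t$. Then $\lim_{t\to\infty} f(t)/a_t=1$. *)

theory Defs
  imports "HOL-Analysis.Analysis"
begin

end

theory Submission
  imports Defs
begin


lemma conv3:
  fixes A :: "real \<Rightarrow> real"
  assumes cv: "convex_on S A" and u: "u \<in> S" and w: "w \<in> S" and uv: "u < v" and vw: "v < w"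
  shows "(w - u) * A v \<le> (w - v) * A u + (v - u) * A w"
proof -
  define t where "t = (v - u) / (w - u)"
  have t0: "0 \<le> t" and t1: "t \<le> 1" using uv vw by (auto simp: t_def field_simps)
  have tw: "t * (w - u) = v - u" using uv vw by (simp add: t_def)
  have eq: "(1 - t) *\<^sub>R u + t *\<^sub>R w = v"
  proof -
    have "(1 - t) *\<^sub>R u + t *\<^sub>R w = u + t * (w - u)" by (simp add: algebra_simps)
    thus ?thesis using tw by simp
  qed
  have "A v \<le> (1 - t) * A u + t * A w"
    using convex_onD[OF cv t0 t1 u w] eq by simp
  then have "(w - u) * A v \<le> (w - u) * ((1 - t) * A u + t * A w)"
    using uv vw by (intro mult_left_mono) auto
  also have "\<dots> = (w - u) * A u - (t * (w - u)) * A u + (t * (w - u)) * A w"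
    by (simp add: algebra_simps)
  also have "\<dots> = (w - v) * A u + (v - u) * A w"
    unfolding tw by (simp add: algebra_simps)
  finally show ?thesis .
qed

lemma conv_anti:
  fixes A :: "real \<Rightarrow> real"
  assumes cv: "convex_on {x0<..} A" and lim: "(A \<longlongrightarrow> 0) at_top"
    and pos: "\<And>x. x > x0 \<Longrightarrow> A x > 0"
    and x: "x0 < x" and xy: "x \<le> y"
  shows "A y \<le> A x"
proof (rule ccontr)
  assume "\<not> A y \<le> A x"
  hence lt: "A x < A y" by simp
  hence xy': "x < y" using xy by (cases "x = y") auto
  have Ay: "A y > 0" using pos[of x] x lt by simp
  have ge: "A z \<ge> A y" if z: "z > y" for z
  proof -
    have "(z - x) * A y \<le> (z - y) * A x + (y - x) * A z"
      using conv3[OF cv, where u=x and v=y and w=z] x xy' z by auto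
    also have "\<dots> \<le> (z - y) * A y + (y - x) * A z"
      using lt z by (intro add_right_mono mult_left_mono) auto
    finally have "(y - x) * A y \<le> (y - x) * A z" by (simp add: algebra_simps)
    thus ?thesis using xy' by simp
  qed
  have "eventually (\<lambda>z. A z < A y) at_top"
    using order_tendstoD(2)[OF lim Ay] .
  then obtain N where N: "\<And>z. z \<ge> N \<Longrightarrow> A z < A y" by (auto simp: eventually_at_top_linorder)
  have "A (max N (y+1)) < A y" by (rule N) simp
  moreover have "A (max N (y+1)) \<ge> A y" by (rule ge) simp
  ultimately show False by simp
qed



lemma G_bounds:
  fixes g :: "real \<Rightarrow> real"
  assumes cont: "continuous_on {c..} g" and mono: "\<And>x y. c \<le> x \<Longrightarrow> x \<le> y \<Longrightarrow> g x \<le> g y"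
    and cu: "c \<le> u" and uv: "u \<le> v"
  shows "(v - u) * g u \<le> integral {c..v} g - integral {c..u} g"
    and "integral {c..v} g - integral {c..u} g \<le> (v - u) * g v"
proof -
  have int: "g integrable_on {c..v}"
    by (rule integrable_continuous_real) (rule continuous_on_subset[OF cont], auto)
  have intuv: "g integrable_on {u..v}"
    by (rule integrable_continuous_real) (rule continuous_on_subset[OF cont], use cu in auto)
  have eq: "integral {c..v} g - integral {c..u} g = integral {u..v} g"
    using Henstock_Kurzweil_Integration.integral_combine[OF cu uv int] by simp
  have "integral {u..v} (\<lambda>_. g u) \<le> integral {u..v} g"
    by (rule integral_le) (use intuv cu mono in auto)
  thus "(v - u) * g u \<le> integral {c..v} g - integral {c..u} g" using eq uv by simp
  have "integral {u..v} g \<le> integral {u..v} (\<lambda>_. g v)"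
    by (rule integral_le) (use intuv cu mono in auto)
  thus "integral {c..v} g - integral {c..u} g \<le> (v - u) * g v" using eq uv by simp
qed

lemma G_deriv:
  fixes g :: "real \<Rightarrow> real"
  assumes cont: "continuous_on {c..} g" and x: "c < x"
  shows "((\<lambda>x. integral {c..x} g) has_real_derivative g x) (at x)"
proof -
  have "((\<lambda>x. integral {c..x} g) has_real_derivative g x) (at x within {c..x+1})"
    by (rule integral_has_real_derivative) (rule continuous_on_subset[OF cont], use x in auto)
  moreover have "at x within {c..x+1} = at x" using x by (intro at_within_Icc_at) auto
  ultimately show ?thesis by simp
qed



lemma seq_mono:
  fixes a :: "nat \<Rightarrow> real"
  assumes step: "\<And>t. t \<ge> 1 \<Longrightarrow> a t \<le> a (t + 1)" and s: "1 \<le> s" and st: "s \<le> t"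
  shows "a s \<le> a t"
  using st
proof (induction t rule: dec_induct)
  case base then show ?case by simp
next
  case (step n)
  then show ?case using assms(1)[of n] s by simp
qed

lemma seq_unbounded:
  fixes A :: "real \<Rightarrow> real" and a :: "nat \<Rightarrow> real"
  assumes cont: "continuous_on {0<..} A" and pos: "\<And>x. x > 0 \<Longrightarrow> A x > 0"
    and a_pos: "\<And>t. t \<ge> 1 \<Longrightarrow> a t > 0"
    and a_rec: "\<And>t. t \<ge> 1 \<Longrightarrow> a (t + 1) = a t + A (a t)"
  shows "\<exists>t\<ge>1. a t > M"
proof (rule ccontr)
  assume "\<not> (\<exists>t\<ge>1. a t > M)"
  hence bnd: "\<And>t. t \<ge> 1 \<Longrightarrow> a t \<le> M" by auto
  have a1: "a 1 \<le> M" "a 1 > 0" using bnd a_pos by auto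
  have "\<exists>x\<in>{a 1..M}. \<forall>y\<in>{a 1..M}. A x \<le> A y"
    by (rule continuous_attains_inf) (use a1 in \<open>auto intro: continuous_on_subset[OF cont]\<close>)
  then obtain x where x: "x \<in> {a 1..M}" and xmin: "\<And>y. y \<in> {a 1..M} \<Longrightarrow> A x \<le> A y" by auto
  define m where "m = A x"
  have m: "m > 0" using x a1 pos by (auto simp: m_def)
  have stp: "a t \<le> a (t + 1)" if "t \<ge> 1" for t
    using a_rec[OF that] pos[OF a_pos[OF that]] by simp
  have lin: "a (n + 1) \<ge> a 1 + real n * m" for n
  proof (induction n)
    case 0 then show ?case by simp
  next
    case (Suc n)
    have "a 1 \<le> a (n + 1)" by (rule seq_mono[where a=a, OF stp]) auto
    moreover have "a (n + 1) \<le> M" by (rule bnd) simp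
    ultimately have "m \<le> A (a (n + 1))" unfolding m_def by (intro xmin) auto
    moreover have "a (Suc n + 1) = a (n + 1) + A (a (n + 1))" using a_rec[of "n+1"] by simp
    ultimately show ?case using Suc.IH by (simp add: algebra_simps)
  qed
  obtain n :: nat where n: "(M - a 1) / m < real n" using reals_Archimedean2 by blast
  hence "M - a 1 < real n * m" using m by (simp add: field_simps)
  hence "a (n + 1) > M" using lin[of n] by simp
  thus False using bnd[of "n+1"] by simp
qed

lemma fun_mono:
  fixes A f :: "real \<Rightarrow> real"
  assumes fd: "\<And>t. t \<ge> T \<Longrightarrow> (f has_real_derivative A (f t)) (at t)"
    and pos: "\<And>t. t \<ge> T \<Longrightarrow> A (f t) > 0"
    and s: "T \<le> s" and st: "s \<le> t"
  shows "f s \<le> f t"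
proof (cases "s = t")
  case False
  hence "s < t" using st by simp
  have "f s < f t"
  proof (rule DERIV_pos_imp_increasing[OF \<open>s < t\<close>])
    fix x assume "s \<le> x" "x \<le> t"
    hence "T \<le> x" using s by simp
    thus "\<exists>y. (f has_real_derivative y) (at x) \<and> 0 < y" using fd[of x] pos[of x] by blast
  qed
  thus ?thesis by simp
qed simp

lemma fun_unbounded:
  fixes A f :: "real \<Rightarrow> real"
  assumes cont: "continuous_on {0<..} A" and Apos: "\<And>x. x > 0 \<Longrightarrow> A x > 0"
    and fd: "\<And>t. t \<ge> T \<Longrightarrow> (f has_real_derivative A (f t)) (at t)"
    and fpos: "\<And>t. t \<ge> T \<Longrightarrow> f t > 0"
  shows "\<exists>t\<ge>T. f t > M"
proof (rule ccontr)
  assume "\<not> (\<exists>t\<ge>T. f t > M)"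
  hence bnd: "\<And>t. t \<ge> T \<Longrightarrow> f t \<le> M" by auto
  have pos: "\<And>t. t \<ge> T \<Longrightarrow> A (f t) > 0" using Apos fpos by blast
  have a1: "f T \<le> M" "f T > 0" using bnd fpos by auto
  have "\<exists>x\<in>{f T..M}. \<forall>y\<in>{f T..M}. A x \<le> A y"
    by (rule continuous_attains_inf) (use a1 in \<open>auto intro: continuous_on_subset[OF cont]\<close>)
  then obtain x where x: "x \<in> {f T..M}" and xmin: "\<And>y. y \<in> {f T..M} \<Longrightarrow> A x \<le> A y" by auto
  define m where "m = A x"
  have m: "m > 0" using x a1 Apos by (auto simp: m_def)
  define t where "t = T + (M - f T) / m + 1"
  have "(M - f T) / m \<ge> 0" using a1 m by simp
  hence Tt: "T < t" by (simp add: t_def)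
  obtain z where z: "T < z" "z < t" and eq: "f t - f T = (t - T) * A (f z)"
    using MVT2[OF Tt, of f "\<lambda>x. A (f x)"] fd by auto
  have "f T \<le> f z" by (rule fun_mono[OF fd pos]) (use z in auto)
  moreover have "f z \<le> M" using bnd z by simp
  ultimately have "m \<le> A (f z)" unfolding m_def by (intro xmin) auto
  hence "(t - T) * m \<le> f t - f T" using eq Tt by simp
  moreover have "(t - T) * m = M - f T + m" using m by (simp add: t_def field_simps)
  ultimately have "f t > M" using m by simp
  thus False using bnd[of t] Tt by simp
qed



theorem lemma3:
  fixes A f :: "real \<Rightarrow> real" and a :: "nat \<Rightarrow> real"
  assumes A_cont: "continuous_on {0<..} A"
    and A_pos: "\<And>x. x > 0 \<Longrightarrow> A x > 0"
    and A_lim: "(A \<longlongrightarrow> 0) at_top"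
    and A_tail: "\<exists>x0>0. convex_on {x0<..} A \<and> (\<forall>x>x0. A differentiable (at x))"
    and a_pos: "\<And>t. t \<ge> 1 \<Longrightarrow> a t > 0"
    and a_rec: "\<And>t. t \<ge> 1 \<Longrightarrow> a (t + 1) = a t + A (a t)"
    and f_pos: "\<And>t. t > 0 \<Longrightarrow> f t > 0"
    and f_deriv: "\<forall>\<^sub>F t in at_top. (f has_real_derivative A (f t)) (at t)"
  shows "(\<lambda>t. f (real t) / a t) \<longlonglongrightarrow> 1"
proof -
  obtain x0 where x0: "x0 > 0" and cv: "convex_on {x0<..} A" using A_tail by blast
  define c where "c = x0 + 1"
  have c: "c > 0" "x0 < c" using x0 by (auto simp: c_def)
  have posx0: "\<And>x. x > x0 \<Longrightarrow> A x > 0" using A_pos x0 by simp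
  have anti: "\<And>x y. x0 < x \<Longrightarrow> x \<le> y \<Longrightarrow> A y \<le> A x"
    by (rule conv_anti[OF cv A_lim posx0])
  define g where "g = (\<lambda>s. 1 / A s)"
  have Anz: "\<And>s. s \<in> {c..} \<Longrightarrow> A s \<noteq> 0"
  proof -
    fix s assume "s \<in> {c..}"
    hence "s > 0" using c by simp
    thus "A s \<noteq> 0" using A_pos[of s] by simp
  qed
  have sub: "{c..} \<subseteq> {0<..}" using c by auto
  have gcont: "continuous_on {c..} g" unfolding g_def
    by (intro continuous_on_divide continuous_on_const continuous_on_subset[OF A_cont sub]) (use Anz in blast)
  have gmono: "\<And>x y. c \<le> x \<Longrightarrow> x \<le> y \<Longrightarrow> g x \<le> g y"
  proof -
    fix x y :: real assume xy: "c \<le> x" "x \<le> y"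
    have "A y > 0" using A_pos[of y] xy c by simp
    moreover have "A y \<le> A x" using anti[of x y] xy c by simp
    ultimately show "g x \<le> g y" unfolding g_def by (intro frac_le) auto
  qed
  have gpos: "\<And>x. x > 0 \<Longrightarrow> g x > 0" using A_pos by (simp add: g_def)
  have gA: "\<And>x. x > 0 \<Longrightarrow> g x * A x = 1"
  proof -
    fix x :: real assume "x > 0"
    hence "A x > 0" by (rule A_pos)
    thus "g x * A x = 1" by (simp add: g_def)
  qed
  define G where "G = (\<lambda>x. integral {c..x} g)"
  have Gb1: "\<And>u v. c \<le> u \<Longrightarrow> u \<le> v \<Longrightarrow> (v - u) * g u \<le> G v - G u"
    unfolding G_def by (rule G_bounds(1)[OF gcont gmono])
  have Gb2: "\<And>u v. c \<le> u \<Longrightarrow> u \<le> v \<Longrightarrow> G v - G u \<le> (v - u) * g v"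
    unfolding G_def by (rule G_bounds(2)[OF gcont gmono])
  have Gc: "G c = 0" by (simp add: G_def)
  have Gder: "\<And>x. c < x \<Longrightarrow> (G has_real_derivative g x) (at x)"
    unfolding G_def by (rule G_deriv[OF gcont])
  have Gmono: "\<And>u v. c \<le> u \<Longrightarrow> u \<le> v \<Longrightarrow> G u \<le> G v"
  proof -
    fix u v :: real assume uv: "c \<le> u" "u \<le> v"
    have "0 \<le> (v - u) * g u" using uv c gpos[of u] by simp
    thus "G u \<le> G v" using Gb1[OF uv] by simp
  qed
  have Gup: "\<And>u. c \<le> u \<Longrightarrow> G u \<le> u * g u"
  proof -
    fix u assume u: "c \<le> u"
    have "G u \<le> (u - c) * g u" using Gb2[of c u] u Gc by simp
    also have "\<dots> \<le> u * g u" using gpos[of u] u c by (simp add: mult_right_mono)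
    finally show "G u \<le> u * g u" .
  qed
  have stp: "a t \<le> a (t + 1)" if "t \<ge> 1" for t
    using a_rec[OF that] A_pos[OF a_pos[OF that]] by simp
  have amono: "\<And>s t. 1 \<le> s \<Longrightarrow> s \<le> t \<Longrightarrow> a s \<le> a t"
    by (rule seq_mono[where a=a, OF stp])
  have a_ev: "\<exists>N\<ge>1. \<forall>t\<ge>N. a t > M" for M
  proof -
    obtain N where N: "N \<ge> 1" "a N > M" using seq_unbounded[where A=A and a=a and M=M, OF A_cont A_pos a_pos a_rec] by blast
    have "\<forall>t\<ge>N. a t > M" using amono[of N] N by force
    thus ?thesis using N by blast
  qed
  obtain T0 where T0: "\<And>t. t \<ge> T0 \<Longrightarrow> (f has_real_derivative A (f t)) (at t)"
    using f_deriv by (auto simp: eventually_at_top_linorder)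
  define T where "T = max T0 1"
  have fd: "\<And>t. t \<ge> T \<Longrightarrow> (f has_real_derivative A (f t)) (at t)" using T0 by (simp add: T_def)
  have fpos: "\<And>t. t \<ge> T \<Longrightarrow> f t > 0" using f_pos by (simp add: T_def)
  have Afpos: "\<And>t. t \<ge> T \<Longrightarrow> A (f t) > 0" using fpos A_pos by blast
  obtain T1 where T1: "T1 \<ge> T" "f T1 > c" using fun_unbounded[where A=A and f=f and T=T and M=c, OF A_cont A_pos fd fpos] by blast
  have fc: "\<And>t. t \<ge> T1 \<Longrightarrow> f t > c"
    using fun_mono[where A=A and f=f and T=T, OF fd Afpos] T1 by (meson less_le_trans)
  define K where "K = G (f T1) - T1"
  have GfK: "G (f t) = t + K" if t: "t \<ge> T1" for t
  proof -
    define H where "H = (\<lambda>t. G (f t) - t)"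
    have dH: "(H has_real_derivative 0) (at x)" if x: "x \<ge> T1" for x
    proof -
      have "((\<lambda>t. G (f t)) has_real_derivative g (f x) * A (f x)) (at x)"
        by (rule DERIV_chain2[OF Gder fd]) (use x fc T1 in auto)
      hence "(H has_real_derivative g (f x) * A (f x) - 1) (at x)"
        unfolding H_def by (intro DERIV_diff DERIV_ident)
      moreover have "g (f x) * A (f x) = 1" using gA fc[OF x] c by simp
      ultimately show ?thesis by simp
    qed
    have "H t = H T1"
    proof (cases "t = T1")
      case False
      hence lt: "T1 < t" using t by simp
      show ?thesis
      proof (rule DERIV_isconst2[OF lt])
        show "continuous_on {T1..t} H"
          by (rule DERIV_atLeastAtMost_imp_continuous_on) (use dH in auto)
      qed (use dH t in auto)
    qed simp
    thus ?thesis by (simp add: H_def K_def)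
  qed

  have step_lo: "G (a (t+1)) - G (a t) \<ge> 1" if t: "t \<ge> 1" "a t \<ge> c" for t
  proof -
    have "(a (t+1) - a t) * g (a t) \<le> G (a (t+1)) - G (a t)"
      using Gb1[of "a t" "a (t+1)"] t stp[OF t(1)] by simp
    moreover have "(a (t+1) - a t) * g (a t) = 1"
      using a_rec[OF t(1)] gA[of "a t"] c t by (simp add: mult.commute)
    ultimately show ?thesis by simp
  qed
  have step_hi: "G (a (t+1)) - G (a t) \<le> 1 / (1 - \<eta>)"
    if t: "t \<ge> 1" "a t > c" and eta: "A (a t - 1) \<le> \<eta>" "\<eta> < 1" for t \<eta>
  proof -
    define x where "x = a t"
    define h where "h = A x"
    have x: "x > c" using t by (simp add: x_def)
    have h: "h > 0" using A_pos[of x] x c by (simp add: h_def)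
    have mem: "x - 1 \<in> {x0<..}" "x + h \<in> {x0<..}" using x h by (auto simp: c_def)
    have "(x + h - (x - 1)) * A x \<le> (x + h - x) * A (x - 1) + (x - (x - 1)) * A (x + h)"
      by (rule conv3[OF cv mem]) (use h in auto)
    hence ineq: "(h + 1) * h \<le> h * A (x - 1) + A (x + h)" by (simp add: h_def algebra_simps)
    have "h * A (x - 1) \<le> h * \<eta>" using eta h by (simp add: x_def)
    hence "(h+1)*h - h * \<eta> \<le> A (x + h)" using ineq by simp
    moreover have "h * (1 - \<eta>) \<le> (h+1)*h - h*\<eta>" using h by (simp add: algebra_simps)
    ultimately have Axh: "h * (1 - \<eta>) \<le> A (x + h)" by linarith
    have pos1: "h * (1 - \<eta>) > 0" using h eta by simp
    have "G (x + h) - G x \<le> (x + h - x) * g (x + h)" using Gb2[of x "x+h"] x h by simp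
    also have "\<dots> = h / A (x + h)" by (simp add: g_def)
    also have "\<dots> \<le> h / (h * (1 - \<eta>))" using Axh pos1 h by (intro divide_left_mono) auto
    also have "\<dots> = 1 / (1 - \<eta>)" using h by simp
    finally show ?thesis using a_rec[OF t(1)] by (simp add: x_def h_def)
  qed
  have sum_lo: "G (a t) \<ge> G (a N) + (real t - real N)" if N: "N \<ge> 1" "a N \<ge> c" and tN: "t \<ge> N" for N t
    using tN
  proof (induction t rule: dec_induct)
    case base then show ?case by simp
  next
    case (step n)
    have "a n \<ge> c" using amono[of N n] N step.hyps by simp
    hence "G (a (n+1)) - G (a n) \<ge> 1" using step_lo[of n] N step.hyps by simp
    thus ?case using step.IH by simp
  qed
  have sum_hi: "G (a t) \<le> G (a N) + (real t - real N) / (1 - \<eta>)"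
    if N: "N \<ge> 1" "\<forall>n\<ge>N. a n > c \<and> A (a n - 1) \<le> \<eta>" and eta: "\<eta> < 1" and tN: "t \<ge> N" for N t \<eta>
    using tN
  proof (induction t rule: dec_induct)
    case base then show ?case by simp
  next
    case (step n)
    have "G (a (n+1)) - G (a n) \<le> 1 / (1 - \<eta>)" using step_hi[of n \<eta>] N eta step.hyps by simp
    moreover have "(real (Suc n) - real N) / (1 - \<eta>) = (real n - real N) / (1 - \<eta>) + 1 / (1 - \<eta>)"
      using eta by (simp add: field_simps)
    ultimately show ?case using step.IH by simp
  qed
  have ev_hi: "\<exists>N\<ge>1. \<forall>n\<ge>N. a n > c \<and> A (a n - 1) \<le> \<eta>" if eta0: "\<eta> > 0" for \<eta>
  proof -
    obtain X where X: "\<And>x. x \<ge> X \<Longrightarrow> A x < \<eta>"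
      using order_tendstoD(2)[OF A_lim eta0] by (auto simp: eventually_at_top_linorder)
    obtain N where N: "N \<ge> 1" "\<forall>n\<ge>N. a n > max c (X + 1)" using a_ev by blast
    have "\<forall>n\<ge>N. a n > c \<and> A (a n - 1) \<le> \<eta>"
    proof (intro allI impI)
      fix n assume "n \<ge> N"
      hence "a n > max c (X+1)" using N by blast
      thus "a n > c \<and> A (a n - 1) \<le> \<eta>" using X[of "a n - 1"] by simp
    qed
    thus ?thesis using N by blast
  qed
  obtain N0 where N0: "N0 \<ge> 1" "\<forall>t\<ge>N0. a t > c" using a_ev by blast
  define NT where "NT = nat \<lceil>T1\<rceil>"
  have NT: "real t \<ge> T1" if "t \<ge> NT" for t
  proof -
    have "T1 \<le> real (nat \<lceil>T1\<rceil>)" by (rule real_nat_ceiling_ge)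
    moreover have "real (nat \<lceil>T1\<rceil>) \<le> real t" using that by (simp add: NT_def)
    ultimately show ?thesis by linarith
  qed
  show ?thesis
  proof (rule order_tendstoI)
    fix b :: real assume b: "1 < b"
    define C0 where "C0 = G (a N0) - real N0"
    obtain M :: nat where M: "(K - b * C0) / (b - 1) < real M" using reals_Archimedean2 by blast
    show "eventually (\<lambda>t. f (real t) / a t < b) sequentially"
      unfolding eventually_sequentially
    proof (intro exI[of _ "max (max N0 NT) M"] allI impI)
      fix t assume t: "max (max N0 NT) M \<le> t"
      have tN0: "t \<ge> N0" and tT: "real t \<ge> T1" and tM: "real t > (K - b*C0)/(b-1)"
        using t NT M by auto
      have at: "a t > c" using N0 tN0 by blast
      have apos: "a t > 0" using at c by simp
      have aN0: "a N0 \<ge> c" using N0 by auto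
      have lo: "G (a t) \<ge> real t + C0" using sum_lo[OF N0(1) aN0 tN0] by (simp add: C0_def)
      have tM': "K - b * C0 < (b - 1) * real t" using tM b by (simp add: pos_divide_less_eq mult.commute)
      show "f (real t) / a t < b"
      proof (rule ccontr)
        assume "\<not> f (real t) / a t < b"
        hence fb: "f (real t) \<ge> b * a t" using apos by (simp add: field_simps)
        have aba: "a t \<le> b * a t" using b apos by simp
        have "G (b * a t) - G (a t) \<ge> (b * a t - a t) * g (a t)"
          using Gb1[of "a t" "b * a t"] at aba by simp
        moreover have "(b * a t - a t) * g (a t) = (b - 1) * (a t * g (a t))" by (simp add: algebra_simps)
        moreover have "(b - 1) * (a t * g (a t)) \<ge> (b - 1) * G (a t)"
          using Gup[of "a t"] at b by (intro mult_left_mono) auto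
        ultimately have Gba: "G (b * a t) \<ge> b * G (a t)" by (simp add: algebra_simps)
        have "G (f (real t)) \<ge> G (b * a t)" using Gmono[of "b * a t" "f (real t)"] fb at aba by simp
        moreover have "G (f (real t)) = real t + K" using GfK tT by simp
        moreover have "b * G (a t) \<ge> b * (real t + C0)" using lo b by (intro mult_left_mono) auto
        ultimately have "real t + K \<ge> b * (real t + C0)" using Gba by linarith
        thus False using tM' by (simp add: algebra_simps)
      qed
    qed
  next
    fix b :: real assume b: "b < 1"
    show "eventually (\<lambda>t. b < f (real t) / a t) sequentially"
    proof (cases "b \<le> 0")
      case True
      show ?thesis unfolding eventually_sequentially
      proof (intro exI[of _ "max N0 NT"] allI impI)
        fix t assume t: "max N0 NT \<le> t"
        hence "a t > c" "real t \<ge> T1" using N0 NT by auto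
        hence "a t > 0" "f (real t) > 0" using c fc[of "real t"] by auto
        hence "f (real t) / a t > 0" by simp
        thus "b < f (real t) / a t" using True by linarith
      qed
    next
      case False
      hence b0: "0 < b" by simp
      define B where "B = (1 + 1/b) / 2"
      have ib: "1 / b > 1" using b0 b by (simp add: field_simps)
      have B1: "B > 1" using ib by (simp add: B_def)
      have bB: "b * B < 1"
      proof -
        have "b * B = (b + 1) / 2" using b0 by (simp add: B_def field_simps)
        thus ?thesis using b by simp
      qed
      define \<eta> where "\<eta> = 1 - 1 / B"
      have eta: "\<eta> > 0" "\<eta> < 1" using B1 by (auto simp: \<eta>_def)
      have eB: "1 - \<eta> = 1 / B" by (simp add: \<eta>_def)
      obtain N1 where N1: "N1 \<ge> 1" "\<forall>n\<ge>N1. a n > c \<and> A (a n - 1) \<le> \<eta>" using ev_hi[OF eta(1)] by blast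
      define C1 where "C1 = G (a N1) - real N1 * B"
      obtain N2 where N2: "\<forall>t\<ge>N2. a t > c / b" using a_ev by blast
      obtain M :: nat where M: "(b * C1 - K) / (1 - b * B) < real M" using reals_Archimedean2 by blast
      show ?thesis unfolding eventually_sequentially
      proof (intro exI[of _ "max (max N1 N2) (max NT M)"] allI impI)
        fix t assume t: "max (max N1 N2) (max NT M) \<le> t"
        have tN1: "t \<ge> N1" and tT: "real t \<ge> T1" and tM: "real t > (b * C1 - K) / (1 - b * B)"
          and tN2: "t \<ge> N2" using t NT M by auto
        have at: "a t > c" using N1 tN1 by blast
        have apos: "a t > 0" using at c by simp
        have hi0: "G (a t) \<le> G (a N1) + (real t - real N1) / (1 - \<eta>)"
          by (rule sum_hi[OF N1 eta(2) tN1])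
        have "(real t - real N1) / (1 - \<eta>) = (real t - real N1) * B" using B1 by (simp add: eB)
        hence hi: "G (a t) \<le> real t * B + C1" using hi0 by (simp add: C1_def algebra_simps)
        define y where "y = b * a t"
        have yc: "y > c" using N2 tN2 b0 by (simp add: y_def pos_divide_less_eq mult.commute)
        have ya: "y \<le> a t" using b apos by (simp add: y_def)
        have tM': "b * C1 - K < (1 - b * B) * real t" using tM bB by (simp add: pos_divide_less_eq mult.commute)
        show "b < f (real t) / a t"
        proof (rule ccontr)
          assume "\<not> b < f (real t) / a t"
          hence fb: "f (real t) \<le> y" using apos by (simp add: field_simps y_def)
          have fc': "f (real t) > c" using fc tT by simp
          have Gfy: "G (f (real t)) \<le> G y" using Gmono[of "f (real t)" y] fc' fb by simp
          have d1: "(a t - y) * g y \<le> G (a t) - G y" using Gb1[of y "a t"] yc ya by simp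
          have d2: "G y \<le> b * (a t * g y)" using Gup[of y] yc by (simp add: y_def)
          have e1: "(a t - y) * g y = (1 - b) * (a t * g y)" by (simp add: y_def algebra_simps)
          have "b * ((1 - b) * (a t * g y)) \<le> b * (G (a t) - G y)"
            using d1 e1 b0 by (intro mult_left_mono) auto
          moreover have "(1 - b) * G y \<le> (1 - b) * (b * (a t * g y))"
            using d2 b by (intro mult_left_mono) auto
          ultimately have "(1 - b) * G y \<le> b * (G (a t) - G y)" by (simp add: algebra_simps)
          hence bG: "G y \<le> b * G (a t)" by (simp add: algebra_simps)
          have "G (f (real t)) = real t + K" using GfK tT by simp
          moreover have "b * G (a t) \<le> b * (real t * B + C1)" using hi b0 by (intro mult_left_mono) auto
          ultimately have "real t + K \<le> b * (real t * B + C1)" using Gfy bG by linarith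
          thus False using tM' by (simp add: algebra_simps)
        qed
      qed
    qed
  qed
qed

end
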